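(* Let $\mu_{x_0}$ be the law of a self-adjoint $x_0\in\mathscr{A}^\Delta$, not a Dirac mass, with $\int_1^\infty\log x\,d\mu_{x_0}(x)<\infty$. Let $\alpha\ge0$, $\beta>0$, $s=\alpha+\beta$. Then for all $u_0\in\Lambda_{x_0,s}\cap\mathbb R$, \[f_{x_0,\alpha,\beta}''(u_0)=2\pi(\alpha-\beta)\,w_{s/2,s/2}'(u_0)=\frac{\alpha-\beta}{s}\psi_{x_0,s}''(u_0),\] where $w_{s/2,s/2}'(u_0)$ denotes the derivative with respect to $u$ at $u=u_0$ of the (vertically constant) density $w_{s/2,s/2}(u+iv)$ of the Brown measure of $x_0+c_s$ on $\Lambda_{x_0,s}$.
   Context: $G(z)=\int\frac{d\mu_{x_0}(x)}{z-x}$, $H_{x_0,r}(z)=z+rG(z)$. $v_{x_0,s}(u)=\inf\{v>0:\int\frac{d\mu_{x_0}(x)}{(u-x)^2+v^2}\le\frac1s\}$, $\Lambda_{x_0,s}=\{u+iv:|v|<v_{x_0,s}(u)\}$. $f_{x_0,\alpha,\beta}(u)=\mathrm{Re}[H_{x_0,\alpha-\beta}(u+iv_{x_0,s}(u))]$ and $\psi_{x_0,s}(u)=H_{x_0,s}(u+iv_{x_0,s}(u))$. $c_s=\tilde\sigma_{s/2}+i\sigma_{s/2}$ with $x_0,\tilde\sigma_{s/2},\sigma_{s/2}$ freely independent semicirculars of variance $s/2$; the Brown measure of $a\in\mathscr{A}^\Delta$ is $\frac1{4\pi}\Delta\lim_{\varepsilon\to0^+}\tau[\log((a-\lambda)^*(a-\lambda)+\varepsilon)]$,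 and that of $x_0+c_s$ has density $w_{s/2,s/2}(u+iv)=\frac{1}{2\pi s}\psi_{x_0,s}'(u)$ on $\Lambda_{x_0,s}$. *)

theory Defs
  imports "HOL-Probability.Probability"
begin

definition cauchy_G :: "real measure \<Rightarrow> complex \<Rightarrow> complex" where
  "cauchy_G mu z = (\<integral>x. 1 / (z - complex_of_real x) \<partial>mu)"

definition H_fun :: "real measure \<Rightarrow> real \<Rightarrow> complex \<Rightarrow> complex" where
  "H_fun mu r z = z + complex_of_real r * cauchy_G mu z"

definition v_fun :: "real measure \<Rightarrow> real \<Rightarrow> real \<Rightarrow> real" where
  "v_fun mu s u = Inf {v::real. 0 < v \<and> (\<integral>x. 1 / ((u - x)^2 + v^2) \<partial>mu) \<le> 1 / s}"

definition Lambda_set :: "real measure \<Rightarrow> real \<Rightarrow> complex set" where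
  "Lambda_set mu s = {z. \<bar>Im z\<bar> < v_fun mu s (Re z)}"

definition f_fun :: "real measure \<Rightarrow> real \<Rightarrow> real \<Rightarrow> real \<Rightarrow> real" where
  "f_fun mu \<alpha> \<beta> u = Re (H_fun mu (\<alpha> - \<beta>) (Complex u (v_fun mu (\<alpha> + \<beta>) u)))"

definition psi_fun :: "real measure \<Rightarrow> real \<Rightarrow> real \<Rightarrow> complex" where
  "psi_fun mu s u = H_fun mu s (Complex u (v_fun mu s u))"

text \<open>Density w_{s/2,s/2} of the Brown measure of x0 + c_s, as given in the context:
  (1/(2 pi s)) psi'_{x0,s}(u) on Lambda_{x0,s}, zero outside.\<close>
definition brown_density :: "real measure \<Rightarrow> real \<Rightarrow> complex \<Rightarrow> complex" where
  "brown_density mu s z =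
     (if z \<in> Lambda_set mu s
      then vector_derivative (psi_fun mu s) (at (Re z)) / complex_of_real (2 * pi * s)
      else 0)"

end

theory Submission imports Defs "HOL-Complex_Analysis.Complex_Analysis" begin

definition "S = {z. 0 < Im z}"

locale gm = prob_space M for M :: "real measure" +
  assumes sb: "sets M = sets borel"
begin

lemma meas: "f \<in> borel_measurable borel \<Longrightarrow> f \<in> borel_measurable M"
  by (subst measurable_cong_sets[OF sb refl])

lemma integ_bdd:
  fixes f :: "real \<Rightarrow> 'b::{banach,second_countable_topology}"
  assumes "f \<in> borel_measurable borel" "\<And>x. norm (f x) \<le> B"
  shows "integrable M f"
  by (rule integrable_const_bound[where B=B]) (use assms meas in auto)

lemma int_le_const:
  fixes f :: "real \<Rightarrow> real"
  assumes "integrable M f" "\<And>x. f x \<le> B"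
  shows "integral\<^sup>L M f \<le> B"
proof -
  have "integral\<^sup>L M f \<le> integral\<^sup>L M (\<lambda>x. B)"
    by (rule integral_mono) (use assms in auto)
  also have "\<dots> = B" by (simp add: prob_space)
  finally show ?thesis .
qed

lemma norm_int_le_const:
  fixes f :: "real \<Rightarrow> complex"
  assumes "integrable M f" "\<And>x. norm (f x) \<le> B"
  shows "norm (integral\<^sup>L M f) \<le> B"
proof -
  have "integrable M (\<lambda>x. norm (f x))" using assms(1) by (rule integrable_norm)
  then have "integral\<^sup>L M (\<lambda>x. norm (f x)) \<le> B" using assms(2) by (rule int_le_const)
  then show ?thesis using integral_norm_bound[of M f] by linarith
qed

lemma cmod_ge_Im: "Im z \<le> cmod (z - complex_of_real x)"
  using abs_Im_le_cmod[of "z - complex_of_real x"] by simp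

lemma integ_inv:
  assumes "Im z > 0"
  shows "integrable M (\<lambda>x. 1 / (z - complex_of_real x))"
proof (rule integ_bdd[where B="1 / Im z"])
  show "(\<lambda>x. 1 / (z - complex_of_real x)) \<in> borel_measurable borel" by measurable
  fix x
  have "Im z \<le> cmod (z - complex_of_real x)" by (rule cmod_ge_Im)
  then show "norm (1 / (z - complex_of_real x)) \<le> 1 / Im z"
    using assms by (simp add: norm_divide frac_le)
qed

lemma integ_inv2:
  assumes "Im z > 0"
  shows "integrable M (\<lambda>x. -1 / (z - complex_of_real x)^2)"
proof (rule integ_bdd[where B="1 / Im z ^ 2"])
  show "(\<lambda>x. -1 / (z - complex_of_real x)^2) \<in> borel_measurable borel" by measurable
  fix x
  have "Im z \<le> cmod (z - complex_of_real x)" by (rule cmod_ge_Im)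
  then have "Im z ^ 2 \<le> cmod (z - complex_of_real x) ^ 2"
    using assms by (intro power_mono) auto
  then show "norm (-1 / (z - complex_of_real x)^2) \<le> 1 / Im z ^ 2"
    using assms by (simp add: norm_divide norm_power frac_le)
qed

lemma alg1:
  fixes a b :: complex
  assumes "a \<noteq> 0" "b \<noteq> 0" "a \<noteq> b"
  shows "(1 / a - 1 / b) / (a - b) - (-1 / b^2) = (a - b) / (a * b^2)"
proof -
  have "a - b \<noteq> 0" using assms by simp
  then show ?thesis using assms by (simp add: field_simps power2_eq_square)
qed

lemma alg2q:
  fixes q v :: real
  assumes "v \<noteq> 0" "q \<noteq> 0"
  shows "- (- (q - 2 * v^2) / q^2) / v + (- v / q) / v^2 = - 2 * v / q^2"
  using assms by (simp add: field_simps power2_eq_square)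
lemma alg2:
  fixes a v :: real
  assumes "v > 0"
  shows "- (- (a^2 - v^2) / (a^2 + v^2)^2) / v + (- v / (a^2 + v^2)) / v^2 = - 2 * v / (a^2 + v^2)^2"
proof -
  have p: "a^2 + v^2 > 0" using assms by (simp add: add_nonneg_pos)
  have "a^2 + v^2 \<noteq> 0" using p by linarith
  moreover have "a^2 - v^2 = (a^2 + v^2) - 2 * v^2" by simp
  ultimately show ?thesis using alg2q[of v "a^2 + v^2"] assms by simp
qed
lemma normb:
  fixes w a b :: complex and d :: real
  assumes "d > 0" "d/2 \<le> cmod a" "d \<le> cmod b"
  shows "norm (w / (a * b^2)) \<le> cmod w * (2 / d^3)"
proof -
  have "d/2 * d^2 \<le> cmod a * cmod b^2"
    using assms by (intro mult_mono power_mono) auto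
  moreover have "0 < d/2 * d^2" using assms by simp
  ultimately have "cmod w / (cmod a * cmod b^2) \<le> cmod w / (d/2 * d^2)"
    by (intro divide_left_mono) auto
  also have "\<dots> = cmod w * (2 / d^3)" by (simp add: power2_eq_square power3_eq_cube)
  finally show ?thesis by (simp add: norm_divide norm_mult norm_power)
qed

definition "G = cauchy_G M"

lemma G_deriv:
  assumes z0: "Im z0 > 0"
  shows "(G has_field_derivative (\<integral>x. -1 / (z0 - complex_of_real x)^2 \<partial>M)) (at z0)"
proof -
  define d where "d = Im z0"
  have d: "d > 0" using z0 d_def by simp
  define D where "D = (\<integral>x. -1 / (z0 - complex_of_real x)^2 \<partial>M)"
  have bound: "norm ((G z - G z0) / (z - z0) - D) \<le> cmod (z - z0) * (2 / d^3)"
    if zd: "dist z z0 < d/2" "z \<noteq> z0" for z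
  proof -
    have "\<bar>Im z - Im z0\<bar> \<le> cmod (z - z0)" using abs_Im_le_cmod[of "z - z0"] by simp
    also have "\<dots> < d/2" using zd by (simp add: dist_norm)
    finally have imz: "Im z > d/2" using d_def by linarith
    have "Im z > 0" using imz d by linarith
    have nz: "z - complex_of_real x \<noteq> 0" "z0 - complex_of_real x \<noteq> 0" for x
      using \<open>Im z > 0\<close> z0 by (auto simp: complex_eq_iff)
    have i1: "integrable M (\<lambda>x. 1 / (z - complex_of_real x))" using \<open>Im z > 0\<close> by (rule integ_inv)
    have i0: "integrable M (\<lambda>x. 1 / (z0 - complex_of_real x))" using z0 by (rule integ_inv)
    have i2: "integrable M (\<lambda>x. -1 / (z0 - complex_of_real x)^2)" using z0 by (rule integ_inv2)
    have "(G z - G z0) / (z - z0) - D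
        = (\<integral>x. (1 / (z - complex_of_real x) - 1 / (z0 - complex_of_real x)) / (z - z0)
               - (-1 / (z0 - complex_of_real x)^2) \<partial>M)"
      using i1 i0 i2 by (simp add: G_def cauchy_G_def D_def)
    also have "\<dots> = (\<integral>x. (z - z0) / ((z - complex_of_real x) * (z0 - complex_of_real x)^2) \<partial>M)"
    proof (intro Bochner_Integration.integral_cong refl)
      fix x
      show "(1 / (z - complex_of_real x) - 1 / (z0 - complex_of_real x)) / (z - z0)
               - (-1 / (z0 - complex_of_real x)^2) =
            (z - z0) / ((z - complex_of_real x) * (z0 - complex_of_real x)^2)"
        using alg1[of "z - complex_of_real x" "z0 - complex_of_real x"] nz[of x] zd(2) by simp
    qed
    also have "norm \<dots> \<le> cmod (z - z0) * (2 / d^3)"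
    proof (rule norm_int_le_const)
      show "integrable M (\<lambda>x. (z - z0) / ((z - complex_of_real x) * (z0 - complex_of_real x)\<^sup>2))"
      proof (rule integ_bdd[where B="cmod (z - z0) * (2 / d^3)"])
        show "(\<lambda>x. (z - z0) / ((z - complex_of_real x) * (z0 - complex_of_real x)\<^sup>2)) \<in> borel_measurable borel"
          by measurable
      next
        fix x
        have a: "d/2 \<le> cmod (z - complex_of_real x)" using cmod_ge_Im[of z x] imz by linarith
        have b: "d \<le> cmod (z0 - complex_of_real x)" using cmod_ge_Im[of z0 x] d_def by linarith
        show "norm ((z - z0) / ((z - complex_of_real x) * (z0 - complex_of_real x)\<^sup>2)) \<le> cmod (z - z0) * (2 / d^3)"
          using normb[OF d a b] .
      qed
    next
      fix x
      have a: "d/2 \<le> cmod (z - complex_of_real x)" using cmod_ge_Im[of z x] imz by linarith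
      have b: "d \<le> cmod (z0 - complex_of_real x)" using cmod_ge_Im[of z0 x] d_def by linarith
      show "norm ((z - z0) / ((z - complex_of_real x) * (z0 - complex_of_real x)\<^sup>2)) \<le> cmod (z - z0) * (2 / d^3)"
        using normb[OF d a b] .
    qed
    finally show ?thesis .
  qed
  have "((\<lambda>z. (G z - G z0) / (z - z0) - D) \<longlongrightarrow> 0) (at z0)"
  proof (rule Lim_null_comparison)
    show "\<forall>\<^sub>F z in at z0. norm ((G z - G z0) / (z - z0) - D) \<le> cmod (z - z0) * (2 / d^3)"
      unfolding eventually_at using d bound by (intro exI[of _ "d/2"]) auto
    have "((\<lambda>z. cmod (z - z0)) \<longlongrightarrow> cmod (z0 - z0)) (at z0)"
      by (intro tendsto_intros)
    then have "((\<lambda>z. cmod (z - z0)) \<longlongrightarrow> 0) (at z0)" by simp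
    then show "((\<lambda>z. cmod (z - z0) * (2 / d ^ 3)) \<longlongrightarrow> 0) (at z0)"
      by (rule tendsto_mult_left_zero)
  qed
  then have "((\<lambda>z. (G z - G z0) / (z - z0)) \<longlongrightarrow> D) (at z0)"
    by (simp add: LIM_zero_iff)
  then show ?thesis unfolding D_def[symmetric] by (simp add: has_field_derivative_iff)
qed


lemma S_open: "open S" unfolding S_def by (rule open_halfspace_Im_gt)

lemma G_hol: "G holomorphic_on S"
  unfolding holomorphic_on_def S_def
  using G_deriv by (metis field_differentiable_at_within field_differentiable_def mem_Collect_eq)

lemma derivG: "z \<in> S \<Longrightarrow> deriv G z = (\<integral>x. -1 / (z - complex_of_real x)^2 \<partial>M)"
  using G_deriv unfolding S_def by (simp add: DERIV_imp_deriv)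

lemma G1_hol: "deriv G holomorphic_on S"
  using G_hol S_open by (rule holomorphic_deriv)

lemma G2_hol: "deriv (deriv G) holomorphic_on S"
  using G1_hol S_open by (rule holomorphic_deriv)

definition "Fr u v = (\<integral>x. 1 / ((u - x)^2 + v^2) \<partial>M)"

lemma Fr_integ: "v > 0 \<Longrightarrow> integrable M (\<lambda>x. 1 / ((u - x)^2 + v^2))"
proof (rule integ_bdd[where B="1/v^2"])
  assume v: "v > 0"
  show "(\<lambda>x. 1 / ((u - x)^2 + v^2)) \<in> borel_measurable borel" by measurable
  fix x
  have "v^2 \<le> (u - x)^2 + v^2" by simp
  then show "norm (1 / ((u - x)^2 + v^2)) \<le> 1/v^2" using v
    by (simp add: frac_le add_pos_nonneg)
qed

lemma Fr_le: assumes "v > 0" shows "Fr u v \<le> 1/v^2"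
  unfolding Fr_def
proof (rule int_le_const[OF Fr_integ[OF assms]])
  fix x
  have "v^2 \<le> (u - x)^2 + v^2" by simp
  then show "1 / ((u - x)^2 + v^2) \<le> 1/v^2" using assms
    by (simp add: frac_le add_pos_nonneg)
qed

lemma Fr_strict: assumes "0 < v1" "v1 < v2" shows "Fr u v2 < Fr u v1"
  unfolding Fr_def
proof (rule integral_less_AE_space)
  show "integrable M (\<lambda>x. 1 / ((u - x)^2 + v2^2))" using assms by (intro Fr_integ) auto
  show "integrable M (\<lambda>x. 1 / ((u - x)^2 + v1^2))" using assms by (intro Fr_integ) auto
  show "emeasure M (space M) \<noteq> 0" by (simp add: emeasure_space_1)
  have "1 / ((u - x)^2 + v2^2) < 1 / ((u - x)^2 + v1^2)" for x
  proof -
    have "v1^2 < v2^2" using assms by (intro power_strict_mono) auto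
    moreover have "0 < (u - x)^2 + v1^2" "0 < (u - x)^2 + v2^2" using assms by (auto simp: add_nonneg_pos)
    ultimately show ?thesis using assms by (intro divide_strict_left_mono) auto
  qed
  then show "AE x in M. 1 / ((u - x)^2 + v2^2) < 1 / ((u - x)^2 + v1^2)" by simp
qed

lemma Im_inv: "Im (1 / (z - complex_of_real x)) = - Im z / ((Re z - x)^2 + (Im z)^2)"
  by (simp add: Im_divide)

lemma Re_inv2: "Re (-1 / (z - complex_of_real x)^2) = - ((Re z - x)^2 - (Im z)^2) / ((Re z - x)^2 + (Im z)^2)^2"
proof -
  have e: "Re ((z - complex_of_real x)^2) = (Re z - x)^2 - (Im z)^2" "Im ((z - complex_of_real x)^2) = 2 * (Re z - x) * Im z"
    by (simp_all add: power2_eq_square algebra_simps)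
  have f: "((Re z - x)^2 - (Im z)^2)^2 + (2 * (Re z - x) * Im z)^2 = ((Re z - x)^2 + (Im z)^2)^2"
    by (simp add: power2_eq_square algebra_simps)
  show ?thesis by (simp only: Re_divide e f) simp
qed

lemma ImG: assumes "z \<in> S" shows "Im (G z) = - Im z * Fr (Re z) (Im z)"
proof -
  have i: "integrable M (\<lambda>x. 1 / (z - complex_of_real x))" using assms integ_inv S_def by auto
  have "Im (G z) = (\<integral>x. Im (1 / (z - complex_of_real x)) \<partial>M)"
    using i by (simp add: G_def cauchy_G_def)
  also have "\<dots> = (\<integral>x. - Im z * (1 / ((Re z - x)^2 + (Im z)^2)) \<partial>M)"
    by (simp add: Im_inv)
  also have "\<dots> = - Im z * Fr (Re z) (Im z)" unfolding Fr_def by (rule integral_mult_right_zero)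
  finally show ?thesis .
qed

definition "Fc z = - Im (G z) / Im z"

lemma Fc_Fr: "z \<in> S \<Longrightarrow> Fc z = Fr (Re z) (Im z)"
  using ImG[of z] by (simp add: Fc_def S_def)

definition "Fu z = - Im (deriv G z) / Im z"
definition "Fv z = - Re (deriv G z) / Im z + Im (G z) / (Im z)^2"

lemma Fv_neg: assumes "z \<in> S" shows "Fv z < 0"
proof -
  define v where "v = Im z"
  have v: "v > 0" using assms unfolding S_def v_def by simp
  have i1: "integrable M (\<lambda>x. 1 / (z - complex_of_real x))" using assms integ_inv S_def by auto
  have i2: "integrable M (\<lambda>x. -1 / (z - complex_of_real x)^2)" using assms integ_inv2 S_def by auto
  have dG: "deriv G z = (\<integral>x. -1 / (z - complex_of_real x)^2 \<partial>M)" using derivG assms by simp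
  have "Fv z = (\<integral>x. - Re (-1 / (z - complex_of_real x)^2) / v + Im (1 / (z - complex_of_real x)) / v^2 \<partial>M)"
    unfolding Fv_def dG using i1 i2 by (simp add: G_def cauchy_G_def v_def)
  also have "\<dots> = (\<integral>x. - 2 * v / ((Re z - x)^2 + v^2)^2 \<partial>M)"
  proof (intro Bochner_Integration.integral_cong refl)
    fix x
    have p: "(Re z - x)^2 + v^2 > 0" using v by (simp add: add_nonneg_pos)
    show "- Re (-1 / (z - complex_of_real x)^2) / v + Im (1 / (z - complex_of_real x)) / v^2 = - 2 * v / ((Re z - x)^2 + v^2)^2"
      unfolding Re_inv2 Im_inv v_def[symmetric] using v by (rule alg2)
  qed
  also have "\<dots> < (\<integral>x. 0 \<partial>M)"
  proof (rule integral_less_AE_space)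
    show "integrable M (\<lambda>x. - 2 * v / ((Re z - x)^2 + v^2)^2)"
    proof (rule integ_bdd[where B="2 * v / (v^2)^2"])
      show "(\<lambda>x. - 2 * v / ((Re z - x)^2 + v^2)^2) \<in> borel_measurable borel" by measurable
      fix x
      have "(v^2)^2 \<le> ((Re z - x)^2 + v^2)^2" using v by (intro power_mono) auto
      then show "norm (- 2 * v / ((Re z - x)^2 + v^2)^2) \<le> 2 * v / (v^2)^2" using v
        by (simp add: frac_le abs_divide)
    qed
    show "integrable M (\<lambda>x. 0::real)" by simp
    show "emeasure M (space M) \<noteq> 0" by (simp add: emeasure_space_1)
    have "(Re z - x)^2 + v^2 > 0" for x using v by (simp add: add_nonneg_pos)
    then show "AE x in M. - 2 * v / ((Re z - x)^2 + v^2)^2 < 0" using v by (simp add: divide_neg_pos)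
  qed
  finally show ?thesis by simp
qed

lemma Fc_deriv: assumes "z \<in> S" shows "(Fc has_derivative (\<lambda>h. Re h * Fu z + Im h * Fv z)) (at z)"
proof -
  have GD: "(G has_derivative (\<lambda>h. deriv G z * h)) (at z)"
    using G_hol S_open assms
    by (metis DERIV_deriv_iff_field_differentiable at_within_open has_field_derivative_def holomorphic_on_def)
  have z: "Im z > 0" using assms unfolding S_def by simp
  show ?thesis unfolding Fc_def[abs_def] using z
    by (auto intro!: derivative_eq_intros GD simp: Fu_def Fv_def fun_eq_iff field_simps power2_eq_square)
qed


lemma Fc_cont: "z \<in> S \<Longrightarrow> isCont Fc z"
  using Fc_deriv has_derivative_continuous by blast

lemma Fr_eps:
  assumes "t > 0" "e > 0"
  shows "\<exists>d>0. \<forall>u v. dist (Complex u v) (Complex u0 t) < d \<longrightarrow> v > 0 \<and> \<bar>Fr u v - Fr u0 t\<bar> < e"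
proof -
  have "Complex u0 t \<in> S" using assms by (simp add: S_def)
  then have "continuous (at (Complex u0 t)) Fc" using Fc_cont by simp
  then obtain d where d: "d > 0" "\<And>z. dist z (Complex u0 t) < d \<Longrightarrow> dist (Fc z) (Fc (Complex u0 t)) < e"
    using assms(2) unfolding continuous_at_eps_delta by blast
  show ?thesis
  proof (intro exI[of _ "min d t"] conjI allI impI)
    show "min d t > 0" using d assms by simp
    fix u v assume h: "dist (Complex u v) (Complex u0 t) < min d t"
    have "\<bar>v - t\<bar> \<le> dist (Complex u v) (Complex u0 t)"
      using abs_Im_le_cmod[of "Complex u v - Complex u0 t"] by (simp add: dist_norm)
    then show v: "v > 0" using h by linarith
    have "dist (Fc (Complex u v)) (Fc (Complex u0 t)) < e" using d h by simp
    then show "\<bar>Fr u v - Fr u0 t\<bar> < e" using v assms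
      by (simp add: Fc_Fr S_def dist_real_def)
  qed
qed

definition "Aset s u = {v::real. 0 < v \<and> Fr u v \<le> 1 / s}"

lemma V_eq: "v_fun M s u = Inf (Aset s u)"
  by (simp add: v_fun_def Aset_def Fr_def)

lemma Aset_ne: assumes "s > 0" shows "s + 1 \<in> Aset s u"
proof -
  have "Fr u (s+1) \<le> 1/(s+1)^2" using assms by (intro Fr_le) auto
  also have "\<dots> \<le> 1/s"
  proof (rule divide_left_mono)
    show "s \<le> (s+1)^2" using assms by (simp add: power2_eq_square algebra_simps)
    show "0 < (s+1)^2 * s" using assms by simp
  qed simp
  finally show ?thesis using assms by (simp add: Aset_def)
qed

lemma Aset_bdd: "bdd_below (Aset s u)"
  unfolding Aset_def by (rule bdd_belowI[of _ 0]) auto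

lemma V_props:
  assumes s: "s > 0" and w: "w > 0" and Fw: "Fr u w > 1/s"
  shows "v_fun M s u \<ge> w" "Fr u (v_fun M s u) = 1/s"
proof -
  let ?A = "Aset s u"
  have gt: "a > w" if "a \<in> ?A" for a
  proof (rule ccontr)
    assume "\<not> a > w"
    then have "a = w \<or> a < w" by auto
    moreover have "a > 0" "Fr u a \<le> 1/s" using that by (auto simp: Aset_def)
    ultimately show False using Fr_strict[of a w u] Fw by auto
  qed
  have ne: "?A \<noteq> {}" using Aset_ne[OF s] by blast
  show ge: "v_fun M s u \<ge> w" unfolding V_eq
    using gt ne by (intro cInf_greatest) (auto intro: less_imp_le)
  define t where "t = v_fun M s u"
  have t: "t > 0" using ge w t_def by simp
  have low: "t \<le> a" if "a \<in> ?A" for a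
    unfolding t_def V_eq using that Aset_bdd by (rule cInf_lower)
  show "Fr u t = 1/s" unfolding t_def[symmetric]
  proof (rule ccontr)
    assume ne1: "Fr u t \<noteq> 1/s"
    obtain d where d: "d > 0" "\<And>u' v. dist (Complex u' v) (Complex u t) < d \<Longrightarrow> v > 0 \<and> \<bar>Fr u' v - Fr u t\<bar> < \<bar>Fr u t - 1/s\<bar>"
      using Fr_eps[OF t, of "\<bar>Fr u t - 1/s\<bar>" u] ne1 by auto
    have dd: "dist (Complex u v) (Complex u t) = \<bar>v - t\<bar>" for v
    proof -
      have "Complex u v - Complex u t = Complex 0 (v - t)" by (simp add: complex_eq_iff)
      then show ?thesis by (simp add: dist_norm complex_norm)
    qed
    show False
    proof (cases "Fr u t > 1/s")
      case True
      have "Inf ?A < t + d" using d t_def V_eq by simp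
      then obtain a where a: "a \<in> ?A" "a < t + d" using cInf_less_iff[OF ne Aset_bdd] by auto
      have "t \<le> a" using low a by simp
      then have "\<bar>Fr u a - Fr u t\<bar> < \<bar>Fr u t - 1/s\<bar>" using d(2)[of u a] dd[of a] a by auto
      moreover have "Fr u a \<le> 1/s" using a by (simp add: Aset_def)
      ultimately show False using True by linarith
    next
      case False
      then have lt: "Fr u t < 1/s" using ne1 by simp
      define a where "a = max (t - d/2) (t/2)"
      have a1: "a < t" "a > 0" using t d by (auto simp: a_def)
      have "\<bar>a - t\<bar> < d" using d t by (auto simp: a_def)
      then have "\<bar>Fr u a - Fr u t\<bar> < \<bar>Fr u t - 1/s\<bar>" using d(2)[of u a] dd[of a] by auto
      then have "Fr u a \<le> 1/s" using lt by linarith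
      then have "a \<in> ?A" using a1 by (simp add: Aset_def)
      then show False using low a1 by fastforce
    qed
  qed
qed

lemma V_nbhd:
  assumes s: "s > 0" and v0: "v_fun M s u0 > 0"
  obtains N where "open N" "u0 \<in> N" "\<And>u. u \<in> N \<Longrightarrow> v_fun M s u > 0 \<and> Fr u (v_fun M s u) = 1/s"
proof -
  define w where "w = v_fun M s u0 / 2"
  have w: "w > 0" using v0 w_def by simp
  have F0: "Fr u0 w > 1/s"
  proof (rule ccontr)
    assume "\<not> Fr u0 w > 1/s"
    then have "w \<in> Aset s u0" using w by (simp add: Aset_def)
    then have "v_fun M s u0 \<le> w" unfolding V_eq using Aset_bdd by (rule cInf_lower)
    then show False using v0 w_def by simp
  qed
  obtain d where d: "d > 0" "\<And>u v. dist (Complex u v) (Complex u0 w) < d \<Longrightarrow> v > 0 \<and> \<bar>Fr u v - Fr u0 w\<bar> < Fr u0 w - 1/s"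
    using Fr_eps[OF w, of "Fr u0 w - 1/s" u0] F0 by auto
  have dd: "dist (Complex u w) (Complex u0 w) = dist u u0" for u
  proof -
    have "Complex u w - Complex u0 w = Complex (u - u0) 0" by (simp add: complex_eq_iff)
    then show ?thesis by (simp add: dist_norm complex_norm dist_real_def)
  qed
  show ?thesis
  proof (rule that[of "ball u0 d"])
    show "open (ball u0 d)" by simp
    show "u0 \<in> ball u0 d" using d by simp
    fix u assume "u \<in> ball u0 d"
    then have "\<bar>Fr u w - Fr u0 w\<bar> < Fr u0 w - 1/s" using d(2)[of u w] dd[of u] by (simp add: dist_commute)
    then have "Fr u w > 1/s" by linarith
    from V_props[OF s w this] w show "v_fun M s u > 0 \<and> Fr u (v_fun M s u) = 1/s" by auto
  qed
qed


definition "P z = complex_of_real (Re z) + \<i> * complex_of_real (Fc z)"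
definition "DP z h = complex_of_real (Re h) + \<i> * complex_of_real (Re h * Fu z + Im h * Fv z)"
definition "gD z w = complex_of_real (Re w) + \<i> * complex_of_real ((Im w - Fu z * Re w) / Fv z)"

lemma P_deriv: "z \<in> S \<Longrightarrow> (P has_derivative DP z) (at z)"
  unfolding P_def[abs_def] DP_def[abs_def]
  by (auto intro!: derivative_eq_intros Fc_deriv)

lemma P_cont: "continuous_on S P"
  using P_deriv has_derivative_continuous continuous_at_imp_continuous_on by blast

lemma P_inj: "inj_on P S"
proof (rule inj_onI)
  fix z1 z2 assume z: "z1 \<in> S" "z2 \<in> S" "P z1 = P z2"
  have re: "Re z1 = Re z2" using arg_cong[OF z(3), of Re] by (simp add: P_def)
  have "Fc z1 = Fc z2" using arg_cong[OF z(3), of Im] by (simp add: P_def)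
  then have e: "Fr (Re z1) (Im z1) = Fr (Re z1) (Im z2)" using z re by (simp add: Fc_Fr)
  have p: "Im z1 > 0" "Im z2 > 0" using z by (auto simp: S_def)
  have "Im z1 = Im z2"
  proof (rule ccontr)
    assume "Im z1 \<noteq> Im z2"
    then have "Im z1 < Im z2 \<or> Im z2 < Im z1" by auto
    then show False using Fr_strict[of "Im z1" "Im z2" "Re z1"] Fr_strict[of "Im z2" "Im z1" "Re z1"] e p by auto
  qed
  then show "z1 = z2" using re by (simp add: complex_eq_iff)
qed

lemma g_deriv: assumes "z \<in> S" shows "(inv_into S P has_derivative gD z) (at (P z))"
proof (rule has_derivative_inverse_strong[OF S_open assms P_cont])
  show "\<And>x. x \<in> S \<Longrightarrow> inv_into S P (P x) = x" using P_inj by (simp add: inv_into_f_f)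
  show "(P has_derivative DP z) (at z)" using assms by (rule P_deriv)
  have "Fv z \<noteq> 0" using Fv_neg[OF assms] by simp
  then show "DP z \<circ> gD z = id" by (simp add: fun_eq_iff DP_def gD_def complex_eq_iff field_simps)
qed

definition "Z1 z = 1 + \<i> * complex_of_real (- Fu z / Fv z)"

lemma curve_vd:
  assumes s: "s > 0" and N: "open N" "\<And>u. u \<in> N \<Longrightarrow> v_fun M s u > 0 \<and> Fr u (v_fun M s u) = 1/s"
    and u: "u \<in> N"
  shows "((\<lambda>u. Complex u (v_fun M s u)) has_vector_derivative Z1 (Complex u (v_fun M s u))) (at u)"
proof -
  have Pc: "P (Complex u' (v_fun M s u')) = Complex u' (1/s)" if "u' \<in> N" for u'
    using N(2)[OF that] by (simp add: P_def Fc_Fr S_def complex_eq_iff)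
  have inS: "Complex u' (v_fun M s u') \<in> S" if "u' \<in> N" for u'
    using N(2)[OF that] by (simp add: S_def)
  define z where "z = Complex u (v_fun M s u)"
  have gd: "(inv_into S P has_derivative gD z) (at (Complex u (1/s)))"
    using g_deriv[OF inS[OF u]] Pc[OF u] by (simp add: z_def)
  have ld: "((\<lambda>u. Complex u (1/s)) has_derivative (\<lambda>h. complex_of_real h)) (at u)"
    unfolding Complex_eq by (auto intro!: derivative_eq_intros)
  have "((inv_into S P \<circ> (\<lambda>u. Complex u (1/s))) has_derivative (gD z \<circ> complex_of_real)) (at u)"
    by (rule diff_chain_at[OF ld gd])
  then have "((\<lambda>u. Complex u (v_fun M s u)) has_derivative (gD z \<circ> complex_of_real)) (at u)"
  proof (rule has_derivative_transform_within_open[OF _ N(1) u])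
    fix u' assume "u' \<in> N"
    then show "(inv_into S P \<circ> (\<lambda>u. Complex u (1 / s))) u' = Complex u' (v_fun M s u')"
      using Pc[of u'] inS[of u'] P_inj by (metis comp_apply inv_into_f_f)
  qed
  moreover have "(gD z \<circ> complex_of_real) = (\<lambda>h. h *\<^sub>R Z1 z)"
    by (simp add: fun_eq_iff gD_def Z1_def complex_eq_iff scaleR_conv_of_real)
  ultimately show ?thesis unfolding has_vector_derivative_def z_def by simp
qed


lemma G_fd: "z \<in> S \<Longrightarrow> (G has_field_derivative deriv G z) (at z)"
  using G_hol S_open
  by (metis DERIV_deriv_iff_field_differentiable at_within_open holomorphic_on_def)

lemma G1_fd: "z \<in> S \<Longrightarrow> (deriv G has_field_derivative deriv (deriv G) z) (at z)"
  using G1_hol S_open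
  by (metis DERIV_deriv_iff_field_differentiable at_within_open holomorphic_on_def)

lemma G_diff: "z \<in> S \<Longrightarrow> G differentiable (at z)"
  using G_fd field_differentiable_imp_differentiable field_differentiable_def by blast

lemma G1_diff: "z \<in> S \<Longrightarrow> deriv G differentiable (at z)"
  using G1_fd field_differentiable_imp_differentiable field_differentiable_def by blast

lemma diff_Im: "f differentiable (at z) \<Longrightarrow> (\<lambda>z. Im (f z)) differentiable (at z)"
  by (rule differentiable_compose[of Im]) (auto intro: bounded_linear_imp_differentiable bounded_linear_Im)

lemma diff_Re: "f differentiable (at z) \<Longrightarrow> (\<lambda>z. Re (f z)) differentiable (at z)"
  by (rule differentiable_compose[of Re]) (auto intro: bounded_linear_imp_differentiable bounded_linear_Re)

lemma diff_ofreal: "(f::complex \<Rightarrow> real) differentiable (at z) \<Longrightarrow> (\<lambda>z. complex_of_real (f z)) differentiable (at z)"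
  by (rule differentiable_compose[of complex_of_real]) (auto intro: bounded_linear_imp_differentiable bounded_linear_of_real)

lemma Fu_diff: "z \<in> S \<Longrightarrow> Fu differentiable (at z)"
  unfolding Fu_def[abs_def]
  by (intro differentiable_divide differentiable_minus diff_Im G1_diff differentiable_ident) (auto simp: S_def)

lemma Fv_diff: "z \<in> S \<Longrightarrow> Fv differentiable (at z)"
  unfolding Fv_def[abs_def]
  by (intro differentiable_add differentiable_divide differentiable_minus diff_Im diff_Re G1_diff G_diff
      differentiable_ident differentiable_power) (auto simp: S_def)

definition "Psi1 s z = Z1 z * (1 + complex_of_real s * deriv G z)"

lemma Psi1_diff: "z \<in> S \<Longrightarrow> Psi1 s differentiable (at z)"
  unfolding Psi1_def[abs_def] Z1_def[abs_def]
  using Fv_neg[of z]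
  by (intro differentiable_mult differentiable_add differentiable_const diff_ofreal differentiable_divide
       differentiable_minus Fu_diff Fv_diff G1_diff) auto

lemma psi_eq: "psi_fun M s u = Complex u (v_fun M s u) + complex_of_real s * G (Complex u (v_fun M s u))"
  by (simp add: psi_fun_def H_fun_def G_def)

lemma psi_vd:
  assumes s: "s > 0" and N: "open N" "\<And>u. u \<in> N \<Longrightarrow> v_fun M s u > 0 \<and> Fr u (v_fun M s u) = 1/s"
    and u: "u \<in> N"
  shows "(psi_fun M s has_vector_derivative Psi1 s (Complex u (v_fun M s u))) (at u)"
proof -
  define zc where "zc = (\<lambda>u. Complex u (v_fun M s u))"
  have inS: "zc u \<in> S" using N(2)[OF u] by (simp add: S_def zc_def)
  have H: "((\<lambda>z. z + complex_of_real s * G z) has_field_derivative (1 + complex_of_real s * deriv G (zc u))) (at (zc u))"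
    using G_fd[OF inS] by (auto intro!: derivative_eq_intros)
  have cv: "(zc has_vector_derivative Z1 (zc u)) (at u)"
    using curve_vd[OF s N(1) N(2) u] by (simp add: zc_def)
  have "(((\<lambda>z. z + complex_of_real s * G z) \<circ> zc) has_vector_derivative
          (Z1 (zc u) * (1 + complex_of_real s * deriv G (zc u)))) (at u)"
    using field_vector_diff_chain_at[OF cv H] .
  moreover have "((\<lambda>z. z + complex_of_real s * G z) \<circ> zc) = psi_fun M s"
    by (simp add: fun_eq_iff psi_eq zc_def)
  ultimately show ?thesis by (simp add: Psi1_def zc_def)
qed

lemma Im_psi:
  assumes "v_fun M s u > 0" "Fr u (v_fun M s u) = 1/s" "s > 0"
  shows "Im (psi_fun M s u) = 0"
proof -
  have "Complex u (v_fun M s u) \<in> S" using assms by (simp add: S_def)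
  from ImG[OF this] show ?thesis using assms by (simp add: psi_eq)
qed

end

lemma vd_Im: "(f has_vector_derivative f') (at x) \<Longrightarrow> ((\<lambda>x. Im (f x)) has_real_derivative Im f') (at x)"
  unfolding has_real_derivative_iff_has_vector_derivative
  by (rule bounded_linear.has_vector_derivative[OF bounded_linear_Im])

lemma vd_Re: "(f has_vector_derivative f') (at x) \<Longrightarrow> ((\<lambda>x. Re (f x)) has_real_derivative Re f') (at x)"
  unfolding has_real_derivative_iff_has_vector_derivative
  by (rule bounded_linear.has_vector_derivative[OF bounded_linear_Re])

lemma vd_div: "(f has_vector_derivative f') (at x) \<Longrightarrow> ((\<lambda>x. f x / (c::complex)) has_vector_derivative f' / c) (at x)"
  by (rule bounded_linear.has_vector_derivative[OF bounded_linear_divide])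

lemma zero_deriv_open:
  assumes "(f has_real_derivative D) (at x)" "open N" "x \<in> N" "\<And>y. y \<in> N \<Longrightarrow> f y = 0"
  shows "D = 0"
proof -
  have "((\<lambda>y. 0) has_real_derivative D) (at x)"
    using has_field_derivative_transform_within_open[OF assms(1-3)] assms(4) by simp
  moreover have "((\<lambda>y. 0) has_real_derivative 0) (at x)" by simp
  ultimately show ?thesis using DERIV_unique by blast
qed

theorem proposition5p10:
  fixes mu :: "real measure" and \<alpha> \<beta> u0 :: real
  assumes "prob_space mu"
    and "sets mu = sets borel"
    and "\<forall>a. mu \<noteq> return borel a"
    and "(\<integral>\<^sup>+x\<in>{1..}. ennreal (ln x) \<partial>mu) < \<infinity>"
    and "\<alpha> \<ge> 0" and "\<beta> > 0"
    and "complex_of_real u0 \<in> Lambda_set mu (\<alpha> + \<beta>)"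
  shows "(\<forall>\<^sub>F u in nhds u0. f_fun mu \<alpha> \<beta> differentiable (at u)
                              \<and> psi_fun mu (\<alpha> + \<beta>) differentiable (at u))
       \<and> deriv (f_fun mu \<alpha> \<beta>) differentiable (at u0)
       \<and> (\<lambda>u. vector_derivative (psi_fun mu (\<alpha> + \<beta>)) (at u)) differentiable (at u0)
       \<and> (\<lambda>u. brown_density mu (\<alpha> + \<beta>) (complex_of_real u)) differentiable (at u0)
       \<and> complex_of_real (deriv (deriv (f_fun mu \<alpha> \<beta>)) u0)
           = complex_of_real (2 * pi * (\<alpha> - \<beta>))
             * vector_derivative (\<lambda>u. brown_density mu (\<alpha> + \<beta>) (complex_of_real u)) (at u0)
       \<and> complex_of_real (deriv (deriv (f_fun mu \<alpha> \<beta>)) u0)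
           = complex_of_real ((\<alpha> - \<beta>) / (\<alpha> + \<beta>))
             * vector_derivative (\<lambda>u. vector_derivative (psi_fun mu (\<alpha> + \<beta>)) (at u)) (at u0)"
proof -
  have "gm mu" unfolding gm_def gm_axioms_def using assms(1,2) by simp
  interpret gm mu by fact
  define s where "s = \<alpha> + \<beta>"
  have s: "s > 0" using assms(5,6) s_def by simp
  define c where "c = (\<alpha> - \<beta>) / s"
  define f where "f = f_fun mu \<alpha> \<beta>"
  define psi where "psi = psi_fun mu s"
  have v0: "v_fun mu s u0 > 0" using assms(7) by (simp add: Lambda_set_def s_def)
  obtain N where N: "open N" "u0 \<in> N" "\<And>u. u \<in> N \<Longrightarrow> v_fun mu s u > 0 \<and> Fr u (v_fun mu s u) = 1/s"
    using V_nbhd[OF s v0] by blast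
  define zc where "zc = (\<lambda>u. Complex u (v_fun mu s u))"
  define p1 where "p1 = (\<lambda>u. Psi1 s (zc u))"
  have vd: "(psi has_vector_derivative p1 u) (at u)" if "u \<in> N" for u
    using psi_vd[OF s N(1) N(3) that] by (simp add: psi_def p1_def zc_def)
  have zcd: "zc differentiable (at u0)"
    using curve_vd[OF s N(1) N(3) N(2)] unfolding zc_def has_vector_derivative_def
    by (rule differentiableI)
  have "zc u0 \<in> S" using v0 by (simp add: zc_def S_def)
  then have "(Psi1 s \<circ> zc) differentiable (at u0)"
    using differentiable_chain_at[OF zcd Psi1_diff] by simp
  then have "p1 differentiable (at u0)" by (simp add: p1_def comp_def)
  then obtain p2 where p2: "(p1 has_vector_derivative p2) (at u0)"
    using vector_derivative_works by blast
  have Impsi: "Im (psi u) = 0" if "u \<in> N" for u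
    using Im_psi[of s u] N(3)[OF that] s by (simp add: psi_def)
  have Imp1: "Im (p1 u) = 0" if "u \<in> N" for u
    using zero_deriv_open[OF vd_Im[OF vd[OF that]] N(1) that Impsi] .
  have Imp2: "Im p2 = 0"
    using zero_deriv_open[OF vd_Im[OF p2] N(1) N(2) Imp1] .
  have feq: "f u = u + c * (Re (psi u) - u)" for u
    using s by (simp add: f_def f_fun_def psi_def psi_eq H_fun_def G_def c_def s_def field_simps)
  have fd: "(f has_real_derivative 1 + c * (Re (p1 u) - 1)) (at u)" if "u \<in> N" for u
  proof -
    have "((\<lambda>u. u + c * (Re (psi u) - u)) has_real_derivative 1 + c * (Re (p1 u) - 1)) (at u)"
      using DERIV_add[OF DERIV_ident DERIV_cmult[OF DERIV_diff[OF vd_Re[OF vd[OF that]] DERIV_ident]], of c]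
      by simp
    moreover have "f = (\<lambda>u. u + c * (Re (psi u) - u))" using feq by (rule ext)
    ultimately show ?thesis by simp
  qed
  have derf: "deriv f u = 1 + c * (Re (p1 u) - 1)" if "u \<in> N" for u
    using fd[OF that] by (rule DERIV_imp_deriv)
  have dd: "((\<lambda>u. 1 + c * (Re (p1 u) - 1)) has_real_derivative c * Re p2) (at u0)"
    using DERIV_add[OF DERIV_const DERIV_cmult[OF DERIV_diff[OF vd_Re[OF p2] DERIV_const]], of 1 c 1]
    by simp
  have ddf: "(deriv f has_real_derivative c * Re p2) (at u0)"
    using has_field_derivative_transform_within_open[OF dd N(1) N(2)] derf by simp
  have vdp: "((\<lambda>u. vector_derivative psi (at u)) has_vector_derivative p2) (at u0)"
  proof (rule has_vector_derivative_transform_within_open[OF p2 N(1) N(2)])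
    fix y assume y: "y \<in> N"
    show "p1 y = vector_derivative psi (at y)" using vector_derivative_at[OF vd[OF y]] by simp
  qed
  have bd: "((\<lambda>u. brown_density mu s (complex_of_real u)) has_vector_derivative p2 / complex_of_real (2 * pi * s)) (at u0)"
  proof (rule has_vector_derivative_transform_within_open[OF vd_div[OF p2] N(1) N(2)])
    fix u assume u: "u \<in> N"
    have "complex_of_real u \<in> Lambda_set mu s" using N(3)[OF u] by (simp add: Lambda_set_def)
    then show "p1 u / complex_of_real (2 * pi * s) = brown_density mu s (complex_of_real u)"
      using vector_derivative_at[OF vd[OF u]] by (simp add: brown_density_def psi_def)
  qed
  have p2r: "p2 = complex_of_real (Re p2)" using Imp2 by (simp add: complex_eq_iff)
  have e1: "deriv (deriv f) u0 = c * Re p2" using ddf by (rule DERIV_imp_deriv)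
  have e2: "vector_derivative (\<lambda>u. brown_density mu s (complex_of_real u)) (at u0) = p2 / complex_of_real (2 * pi * s)"
    using bd by (rule vector_derivative_at)
  have e3: "vector_derivative (\<lambda>u. vector_derivative psi (at u)) (at u0) = p2"
    using vdp by (rule vector_derivative_at)
  have ev: "\<forall>\<^sub>F u in nhds u0. f differentiable (at u) \<and> psi differentiable (at u)"
    unfolding eventually_nhds
  proof (intro exI[of _ N] conjI ballI N)
    fix u assume u: "u \<in> N"
    show "f differentiable (at u)" using fd[OF u] unfolding has_field_derivative_def by (rule differentiableI)
    show "psi differentiable (at u)" using vd[OF u] unfolding has_vector_derivative_def by (rule differentiableI)
  qed
  have r1: "complex_of_real (deriv (deriv f) u0) = complex_of_real (2 * pi * (\<alpha> - \<beta>))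
             * vector_derivative (\<lambda>u. brown_density mu s (complex_of_real u)) (at u0)"
    unfolding e1 e2 using s by (subst p2r) (simp add: c_def field_simps)
  have r2: "complex_of_real (deriv (deriv f) u0) = complex_of_real ((\<alpha> - \<beta>) / s)
             * vector_derivative (\<lambda>u. vector_derivative psi (at u)) (at u0)"
    unfolding e1 e3 by (subst p2r) (simp add: c_def)
  have r3: "deriv f differentiable (at u0)" using ddf unfolding has_field_derivative_def by (rule differentiableI)
  have r4: "(\<lambda>u. vector_derivative psi (at u)) differentiable (at u0)"
    using vdp unfolding has_vector_derivative_def by (rule differentiableI)
  have r5: "(\<lambda>u. brown_density mu s (complex_of_real u)) differentiable (at u0)"
    using bd unfolding has_vector_derivative_def by (rule differentiableI)
  show ?thesis unfolding s_def[symmetric] f_def[symmetric] psi_def[symmetric]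
    using ev r1 r2 r3 r4 r5 by (intro conjI)
qed

end
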